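(* Let $\mathbf A=(A;\cdot,\to,\leadsto,1)$ be a pseudo-hoop and let $F\subseteq A$ be a filter that has a least element. Then $F$ is a normal filter.
   Context: A pseudo-hoop is an algebra $(A;\cdot,\to,\leadsto,1)$ of type $\langle 2,2,2,0\rangle$ such that for all $x,y,z\in A$: $x\cdot 1=x=1\cdot x$; $x\to x=1=x\leadsto x$; $(x\cdot y)\to z=x\to(y\to z)$; $(x\cdot y)\leadsto z=y\leadsto(x\leadsto z)$; and $(x\to y)\cdot x=(y\to x)\cdot y=x\cdot(x\leadsto y)=y\cdot(y\leadsto x)$. Setting $x\le y$ iff $x\to y=1$ gives a partial order with greatest element $1$. A filter is a nonempty upward closed subset closed under $\cdot$. A filter $F$ is normal if for all $x,y\in A$: $x\to y\in F$ iff $x\leadsto y\in F$. *)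

theory Defs
  imports Main
begin

definition pseudo_hoop ::
  "'a set \<Rightarrow> ('a \<Rightarrow> 'a \<Rightarrow> 'a) \<Rightarrow> ('a \<Rightarrow> 'a \<Rightarrow> 'a) \<Rightarrow> ('a \<Rightarrow> 'a \<Rightarrow> 'a) \<Rightarrow> 'a \<Rightarrow> bool" where
  "pseudo_hoop A m imp imp2 one \<longleftrightarrow>
     one \<in> A \<and>
     (\<forall>x\<in>A. \<forall>y\<in>A. m x y \<in> A \<and> imp x y \<in> A \<and> imp2 x y \<in> A) \<and>
     (\<forall>x\<in>A. m x one = x \<and> m one x = x) \<and>
     (\<forall>x\<in>A. imp x x = one \<and> imp2 x x = one) \<and>
     (\<forall>x\<in>A. \<forall>y\<in>A. \<forall>z\<in>A. imp (m x y) z = imp x (imp y z)) \<and>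
     (\<forall>x\<in>A. \<forall>y\<in>A. \<forall>z\<in>A. imp2 (m x y) z = imp2 y (imp2 x z)) \<and>
     (\<forall>x\<in>A. \<forall>y\<in>A.
        m (imp x y) x = m (imp y x) y \<and>
        m (imp y x) y = m x (imp2 x y) \<and>
        m x (imp2 x y) = m y (imp2 y x))"

definition ph_le :: "('a \<Rightarrow> 'a \<Rightarrow> 'a) \<Rightarrow> 'a \<Rightarrow> 'a \<Rightarrow> 'a \<Rightarrow> bool" where
  "ph_le imp one x y \<longleftrightarrow> imp x y = one"

definition ph_filter ::
  "'a set \<Rightarrow> ('a \<Rightarrow> 'a \<Rightarrow> 'a) \<Rightarrow> ('a \<Rightarrow> 'a \<Rightarrow> 'a) \<Rightarrow> 'a \<Rightarrow> 'a set \<Rightarrow> bool" where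
  "ph_filter A m imp one F \<longleftrightarrow>
     F \<subseteq> A \<and> F \<noteq> {} \<and>
     (\<forall>x\<in>F. \<forall>y\<in>A. ph_le imp one x y \<longrightarrow> y \<in> F) \<and>
     (\<forall>x\<in>F. \<forall>y\<in>F. m x y \<in> F)"

definition ph_normal_filter ::
  "'a set \<Rightarrow> ('a \<Rightarrow> 'a \<Rightarrow> 'a) \<Rightarrow> ('a \<Rightarrow> 'a \<Rightarrow> 'a) \<Rightarrow> ('a \<Rightarrow> 'a \<Rightarrow> 'a) \<Rightarrow> 'a \<Rightarrow> 'a set \<Rightarrow> bool" where
  "ph_normal_filter A m imp imp2 one F \<longleftrightarrow>
     ph_filter A m imp one F \<and>
     (\<forall>x\<in>A. \<forall>y\<in>A. imp x y \<in> F \<longleftrightarrow> imp2 x y \<in> F)"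

end

theory Submission
  imports Defs
begin

locale ph =
  fixes A and m (infixl "\<cdot>" 70) and imp (infixr "\<rightarrow>" 60) and imp2 (infixr "\<leadsto>" 60) and one ("\<one>")
  assumes one: "\<one> \<in> A"
  and cm: "x \<in> A \<Longrightarrow> y \<in> A \<Longrightarrow> x \<cdot> y \<in> A"
  and ci: "x \<in> A \<Longrightarrow> y \<in> A \<Longrightarrow> (x \<rightarrow> y) \<in> A"
  and ci2: "x \<in> A \<Longrightarrow> y \<in> A \<Longrightarrow> (x \<leadsto> y) \<in> A"
  and m1: "x \<in> A \<Longrightarrow> x \<cdot> \<one> = x" and m1': "x \<in> A \<Longrightarrow> \<one> \<cdot> x = x"
  and ii: "x \<in> A \<Longrightarrow> (x \<rightarrow> x) = \<one>" and ii2: "x \<in> A \<Longrightarrow> (x \<leadsto> x) = \<one>"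
  and res: "x \<in> A \<Longrightarrow> y \<in> A \<Longrightarrow> z \<in> A \<Longrightarrow> (x \<cdot> y \<rightarrow> z) = (x \<rightarrow> y \<rightarrow> z)"
  and res2: "x \<in> A \<Longrightarrow> y \<in> A \<Longrightarrow> z \<in> A \<Longrightarrow> (x \<cdot> y \<leadsto> z) = (y \<leadsto> x \<leadsto> z)"
  and d1: "x \<in> A \<Longrightarrow> y \<in> A \<Longrightarrow> (x \<rightarrow> y) \<cdot> x = (y \<rightarrow> x) \<cdot> y"
  and d2: "x \<in> A \<Longrightarrow> y \<in> A \<Longrightarrow> (y \<rightarrow> x) \<cdot> y = x \<cdot> (x \<leadsto> y)"
  and d3: "x \<in> A \<Longrightarrow> y \<in> A \<Longrightarrow> x \<cdot> (x \<leadsto> y) = y \<cdot> (y \<leadsto> x)"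
begin
lemma i1: "x \<in> A \<Longrightarrow> (x \<rightarrow> \<one>) = \<one>"
  by (metis (lifting) ext ci d1 ii m1 m1' res)

lemma le12: assumes "x \<in> A" "y \<in> A" "(x \<rightarrow> y) = \<one>" shows "(x \<leadsto> y) = \<one>"
proof -
  have "x = x \<cdot> (x \<leadsto> y)" using d1[of x y] d2[of x y] assms m1' by simp
  hence "(x \<leadsto> y) = ((x \<cdot> (x \<leadsto> y)) \<leadsto> y)" by (rule arg_cong)
  also have "\<dots> = \<one>" using res2 ii2 ci2 assms by simp
  finally show ?thesis .
qed

lemma le21: assumes "x \<in> A" "y \<in> A" "(x \<leadsto> y) = \<one>" shows "(x \<rightarrow> y) = \<one>"
proof -
  have "x = (x \<rightarrow> y) \<cdot> x" using d1[of x y] d2[of x y] assms m1 by simp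
  hence "(x \<rightarrow> y) = (((x \<rightarrow> y) \<cdot> x) \<rightarrow> y)" by (rule arg_cong)
  also have "\<dots> = \<one>" using res ii ci assms by simp
  finally show ?thesis .
qed

lemma i21: "x \<in> A \<Longrightarrow> (x \<leadsto> \<one>) = \<one>"
  using le12 i1 one by blast

lemma antisym: assumes "x \<in> A" "y \<in> A" "(x \<rightarrow> y) = \<one>" "(y \<rightarrow> x) = \<one>" shows "x = y"
  using d1[of x y] assms m1' by simp

lemma trans: assumes "x \<in> A" "y \<in> A" "z \<in> A" "(x \<rightarrow> y) = \<one>" "(y \<rightarrow> z) = \<one>" shows "(x \<rightarrow> z) = \<one>"
proof -
  have "x = (y \<rightarrow> x) \<cdot> y" using d1[of x y] assms m1' by simp
  hence "(x \<rightarrow> z) = ((y \<rightarrow> x) \<cdot> y \<rightarrow> z)" by (rule arg_cong)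
  also have "\<dots> = \<one>" using res assms ci i1 by simp
  finally show ?thesis .
qed

lemma assoc: assumes "x \<in> A" "y \<in> A" "z \<in> A" shows "x \<cdot> y \<cdot> z = x \<cdot> (y \<cdot> z)"
proof -
  have e: "(x \<cdot> y \<cdot> z \<rightarrow> w) = (x \<cdot> (y \<cdot> z) \<rightarrow> w)" if w: "w \<in> A" for w
  proof -
    have "(x \<cdot> y \<cdot> z \<rightarrow> w) = (x \<cdot> y \<rightarrow> z \<rightarrow> w)" using res[of "x \<cdot> y" z w] assms w cm by blast
    also have "\<dots> = (x \<rightarrow> y \<rightarrow> z \<rightarrow> w)" using res[of x y "z \<rightarrow> w"] assms w ci by blast
    also have "\<dots> = (x \<rightarrow> y \<cdot> z \<rightarrow> w)" using res[of y z w] assms w by simp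
    also have "\<dots> = (x \<cdot> (y \<cdot> z) \<rightarrow> w)" using res[of x "y \<cdot> z" w] assms w cm by simp
    finally show ?thesis .
  qed
  have A1: "x \<cdot> y \<cdot> z \<in> A" and A2: "x \<cdot> (y \<cdot> z) \<in> A" using assms cm by auto
  have 1: "(x \<cdot> y \<cdot> z \<rightarrow> x \<cdot> (y \<cdot> z)) = \<one>" using e[OF A2] ii[OF A2] by simp
  have 2: "(x \<cdot> (y \<cdot> z) \<rightarrow> x \<cdot> y \<cdot> z) = \<one>" using e[OF A1] ii[OF A1] by simp
  show ?thesis by (rule antisym[OF A1 A2 1 2])
qed

lemma idem_comm: assumes a: "a \<in> A" "a \<cdot> a = a" and x: "x \<in> A" shows "a \<cdot> x = x \<cdot> a"
proof -
  define z where "z = a \<cdot> x"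
  have zA: "z \<in> A" using z_def cm a x by simp
  have za: "(z \<rightarrow> a) = \<one>"
    using le21[of z a] res2[of a x a] ii2 i21 a x zA z_def by simp
  have zx: "(z \<rightarrow> x) = \<one>" using res[of a x x] ii i1 a x z_def by simp
  have "z = (a \<rightarrow> z) \<cdot> a" using d1[of a z] za m1' a zA by simp
  hence zz: "z \<cdot> a = z"
  proof -
    assume h: "z = (a \<rightarrow> z) \<cdot> a"
    have "z \<cdot> a = (a \<rightarrow> z) \<cdot> a \<cdot> a" using h by (rule arg_cong)
    also have "\<dots> = (a \<rightarrow> z) \<cdot> (a \<cdot> a)" using assoc[of "a \<rightarrow> z" a a] a ci zA by blast
    also have "\<dots> = z" using h a by simp
    finally show ?thesis .
  qed
  have "(x \<rightarrow> a \<rightarrow> x \<cdot> a) = \<one>" using res[of x a "x \<cdot> a"] ii a x cm by simp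
  hence "(z \<rightarrow> a \<rightarrow> x \<cdot> a) = \<one>" using trans[OF zA x _ zx] a x cm ci by simp
  hence 1: "(a \<cdot> x \<rightarrow> x \<cdot> a) = \<one>" using res[of z a "x \<cdot> a"] zz z_def a zA x cm by simp
  define w where "w = x \<cdot> a"
  have wA: "w \<in> A" using w_def cm a x by simp
  have wa: "(w \<rightarrow> a) = \<one>" using res[of x a a] ii i1 a x w_def by simp
  have wx: "(w \<rightarrow> x) = \<one>"
    using le21[of w x] res2[of x a x] ii2 i21 a x wA w_def by simp
  have "w = a \<cdot> (a \<leadsto> w)" using d2[of a w] wa m1' a wA by simp
  hence ww: "a \<cdot> w = w"
  proof -
    assume h: "w = a \<cdot> (a \<leadsto> w)"
    have "a \<cdot> w = a \<cdot> (a \<cdot> (a \<leadsto> w))" using h by (rule arg_cong)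
    also have "\<dots> = a \<cdot> a \<cdot> (a \<leadsto> w)" using assoc[of a a "a \<leadsto> w"] a ci2 wA by simp
    also have "\<dots> = w" using h a by simp
    finally show ?thesis .
  qed
  have "(x \<leadsto> a \<leadsto> a \<cdot> x) = \<one>" using res2[of a x "a \<cdot> x"] ii2 a x cm by simp
  hence "(x \<rightarrow> a \<leadsto> a \<cdot> x) = \<one>" using le21 a x cm ci2 by simp
  hence "(w \<rightarrow> a \<leadsto> a \<cdot> x) = \<one>" using trans[OF wA x _ wx] a x cm ci2 by simp
  hence "(w \<leadsto> a \<leadsto> a \<cdot> x) = \<one>" using le12 a x cm ci2 wA by simp
  hence 2: "(x \<cdot> a \<rightarrow> a \<cdot> x) = \<one>" using res2[of a w "a \<cdot> x"] ww w_def a wA x cm le21 by simp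
  show ?thesis by (rule antisym[OF cm[OF a(1) x] cm[OF x a(1)] 1 2])
qed
end

lemma ph_of: "pseudo_hoop A m imp imp2 one \<Longrightarrow> ph A m imp imp2 one"
  unfolding pseudo_hoop_def by unfold_locales auto

theorem lemma4p5:
  assumes "pseudo_hoop A m imp imp2 one"
    and "ph_filter A m imp one F"
    and "\<exists>a\<in>F. \<forall>x\<in>F. ph_le imp one a x"
  shows "ph_normal_filter A m imp imp2 one F"
proof -
  interpret ph A m imp imp2 one using ph_of[OF assms(1)] .
  have FA: "F \<subseteq> A" and up: "\<And>x y. x \<in> F \<Longrightarrow> y \<in> A \<Longrightarrow> imp x y = one \<Longrightarrow> y \<in> F"
    and mF: "\<And>x y. x \<in> F \<Longrightarrow> y \<in> F \<Longrightarrow> m x y \<in> F"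
    using assms(2) unfolding ph_filter_def ph_le_def by auto
  obtain a where aF: "a \<in> F" and least: "\<And>x. x \<in> F \<Longrightarrow> imp a x = one"
    using assms(3) unfolding ph_le_def by auto
  have aA: "a \<in> A" using aF FA by auto
  have memF: "t \<in> F \<longleftrightarrow> imp a t = one" if "t \<in> A" for t
    using least up aF that by blast
  have aa: "m a a = a"
  proof (rule antisym)
    show "m a a \<in> A" using cm aA by simp
    show "a \<in> A" by (rule aA)
    show "imp (m a a) a = one" using res[of a a a] ii i1 aA by simp
    show "imp a (m a a) = one" using least mF aF by simp
  qed
  have comm: "m a x = m x a" if "x \<in> A" for x using idem_comm[OF aA aa that] .
  have key: "imp x y \<in> F \<longleftrightarrow> imp2 x y \<in> F" if x: "x \<in> A" and y: "y \<in> A" for x y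
  proof -
    have "imp x y \<in> F \<longleftrightarrow> imp a (imp x y) = one" using memF ci x y by simp
    also have "\<dots> \<longleftrightarrow> imp (m a x) y = one" using res[of a x y] aA x y by simp
    also have "\<dots> \<longleftrightarrow> imp (m x a) y = one" using comm x by simp
    also have "\<dots> \<longleftrightarrow> imp2 (m x a) y = one" using le12[of "m x a" y] le21[of "m x a" y] cm[OF x aA] y by blast
    also have "\<dots> \<longleftrightarrow> imp2 a (imp2 x y) = one" using res2[of x a y] aA x y by simp
    also have "\<dots> \<longleftrightarrow> imp a (imp2 x y) = one" using le12[of a "imp2 x y"] le21[of a "imp2 x y"] ci2[OF x y] aA by blast
    also have "\<dots> \<longleftrightarrow> imp2 x y \<in> F" using memF ci2 x y by simp
    finally show ?thesis .
  qed
  show ?thesis unfolding ph_normal_filter_def using assms(2) key by blast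
qed

end
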